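(* Let $\mathcal{F}$ be a multidiforest. Then the complex of directed trees $DT(\mathcal{F})$ is vertex decomposable.
   Context: A multidigraph $G$ consists of finite sets $V$ (vertices) and $E$ (edges) with maps $s,t:E\to V$ (source and target); distinct edges may have the same source and target. Its underlying graph $G^{un}$ has vertex set $V$, with $u,v$ adjacent iff some edge $e$ has $\{s(e),t(e)\}=\{u,v\}$ (in particular a loop $s(e)=t(e)$ makes $G^{un}$ have a loop). $G$ is a multidiforest if $G^{un}$ is a (simple) forest. A directed cycle in $G$ is a connected subgraph $C$ in which every vertex of $C$ is the source of exactly one edge of $C$ and the target of exactly one edge of $C$. A directed forest is a multidigraph with no directed cycle in which distinct edges have distinct targets. The complex of directed trees $DT(G)$ is the simplicial complex on $E$ whose simplices are the subsets $\sigma\subseteq E$ such that the subgraph with edge set $\sigma$ is a directed forest. For a simplicial complex $K$ and a vertex $v$, $\mathrm{lk}(v,K)=\{\tau\in K: v\notin\tau,\ \tau\cup\{v\}\in K\}$ and $\mathrm{del}(v,K)=\{\tau\in K: v\notin\tau\}$. A simplicial complex $K$ is vertex decomposable if $K$ is a simplex (the set of all subsets of a finite set, including $\{\emptyset\}$), or $K$ contains a vertex $v$ such that (i) both $\mathrm{lk}(v,K)$ and $\mathrm{del}(v,K)$ are vertex decomposable, and (ii) every facet (maximal simplex) of $\mathrm{del}(v,K)$ is a facet of $K$. *)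

theory Defs
  imports Main
begin

definition multidigraph :: "'v set \<Rightarrow> 'e set \<Rightarrow> ('e \<Rightarrow> 'v) \<Rightarrow> ('e \<Rightarrow> 'v) \<Rightarrow> bool" where
  "multidigraph V E s t \<longleftrightarrow> finite V \<and> finite E \<and> (\<forall>e\<in>E. s e \<in> V \<and> t e \<in> V)"

definition un_adj :: "'e set \<Rightarrow> ('e \<Rightarrow> 'v) \<Rightarrow> ('e \<Rightarrow> 'v) \<Rightarrow> 'v \<Rightarrow> 'v \<Rightarrow> bool" where
  "un_adj E s t u v \<longleftrightarrow> (\<exists>e\<in>E. {s e, t e} = {u, v})"

definition un_cycle :: "'v set \<Rightarrow> 'e set \<Rightarrow> ('e \<Rightarrow> 'v) \<Rightarrow> ('e \<Rightarrow> 'v) \<Rightarrow> 'v list \<Rightarrow> bool" where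
  "un_cycle V E s t vs \<longleftrightarrow> length vs \<ge> 3 \<and> distinct vs \<and> set vs \<subseteq> V \<and>
     (\<forall>i < length vs. un_adj E s t (vs ! i) (vs ! ((i + 1) mod length vs)))"

definition underlying_forest :: "'v set \<Rightarrow> 'e set \<Rightarrow> ('e \<Rightarrow> 'v) \<Rightarrow> ('e \<Rightarrow> 'v) \<Rightarrow> bool" where
  "underlying_forest V E s t \<longleftrightarrow> (\<forall>v. \<not> un_adj E s t v v) \<and> (\<forall>vs. \<not> un_cycle V E s t vs)"

definition multidiforest :: "'v set \<Rightarrow> 'e set \<Rightarrow> ('e \<Rightarrow> 'v) \<Rightarrow> ('e \<Rightarrow> 'v) \<Rightarrow> bool" where
  "multidiforest V E s t \<longleftrightarrow> multidigraph V E s t \<and> underlying_forest V E s t"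

definition sub_connected :: "'v set \<Rightarrow> 'e set \<Rightarrow> ('e \<Rightarrow> 'v) \<Rightarrow> ('e \<Rightarrow> 'v) \<Rightarrow> bool" where
  "sub_connected W D s t \<longleftrightarrow>
     (\<forall>u\<in>W. \<forall>w\<in>W. (u, w) \<in> ({(s e, t e) | e. e \<in> D} \<union> {(t e, s e) | e. e \<in> D})\<^sup>*)"

definition directed_cycle :: "'v set \<Rightarrow> 'e set \<Rightarrow> ('e \<Rightarrow> 'v) \<Rightarrow> ('e \<Rightarrow> 'v) \<Rightarrow> 'v set \<Rightarrow> 'e set \<Rightarrow> bool" where
  "directed_cycle V E s t W D \<longleftrightarrow> W \<noteq> {} \<and> W \<subseteq> V \<and> D \<subseteq> E \<and>
     (\<forall>e\<in>D. s e \<in> W \<and> t e \<in> W) \<and> sub_connected W D s t \<and>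
     (\<forall>v\<in>W. card {e \<in> D. s e = v} = 1 \<and> card {e \<in> D. t e = v} = 1)"

definition directed_forest :: "'v set \<Rightarrow> 'e set \<Rightarrow> ('e \<Rightarrow> 'v) \<Rightarrow> ('e \<Rightarrow> 'v) \<Rightarrow> bool" where
  "directed_forest V E s t \<longleftrightarrow> (\<forall>W D. \<not> directed_cycle V E s t W D) \<and>
     (\<forall>e1\<in>E. \<forall>e2\<in>E. e1 \<noteq> e2 \<longrightarrow> t e1 \<noteq> t e2)"

definition DT :: "'v set \<Rightarrow> 'e set \<Rightarrow> ('e \<Rightarrow> 'v) \<Rightarrow> ('e \<Rightarrow> 'v) \<Rightarrow> 'e set set" where
  "DT V E s t = {\<sigma>. \<sigma> \<subseteq> E \<and> directed_forest V \<sigma> s t}"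

definition lk :: "'a \<Rightarrow> 'a set set \<Rightarrow> 'a set set" where
  "lk v K = {\<tau> \<in> K. v \<notin> \<tau> \<and> insert v \<tau> \<in> K}"

definition del :: "'a \<Rightarrow> 'a set set \<Rightarrow> 'a set set" where
  "del v K = {\<tau> \<in> K. v \<notin> \<tau>}"

definition facet :: "'a set \<Rightarrow> 'a set set \<Rightarrow> bool" where
  "facet F K \<longleftrightarrow> F \<in> K \<and> (\<forall>G\<in>K. F \<subseteq> G \<longrightarrow> G = F)"

inductive vertex_decomposable :: "'a set set \<Rightarrow> bool" where
  simplex: "finite X \<Longrightarrow> vertex_decomposable (Pow X)"
| decomp: "\<lbrakk> {v} \<in> K; vertex_decomposable (lk v K); vertex_decomposable (del v K);
            \<forall>F. facet F (del v K) \<longrightarrow> facet F K \<rbrakk> \<Longrightarrow> vertex_decomposable K"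

end

theory Submission
  imports Defs
begin

definition conf :: "('e \<Rightarrow> 'v) \<Rightarrow> ('e \<Rightarrow> 'v) \<Rightarrow> 'e \<Rightarrow> 'e \<Rightarrow> bool" where
  "conf s t e f \<longleftrightarrow> e \<noteq> f \<and> (t e = t f \<or> (s e = t f \<and> t e = s f))"

definition indep :: "('a \<Rightarrow> 'a \<Rightarrow> bool) \<Rightarrow> 'a set \<Rightarrow> 'a set set" where
  "indep C X = {\<sigma>. \<sigma> \<subseteq> X \<and> (\<forall>e\<in>\<sigma>. \<forall>f\<in>\<sigma>. \<not> C e f)}"

lemma vd_indep:
  assumes fin: "finite X" and irr: "\<And>e. \<not> C e e" and sym: "\<And>e f. C e f \<Longrightarrow> C f e"
  and simp_ex: "\<And>Y. Y \<subseteq> X \<Longrightarrow> \<exists>e\<in>Y. \<exists>f\<in>Y. C e f \<Longrightarrow>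
        \<exists>v\<in>Y. \<exists>w\<in>Y. C v w \<and> (\<forall>x\<in>Y. C v x \<longrightarrow> x = w \<or> C w x)"
  shows "Y \<subseteq> X \<Longrightarrow> vertex_decomposable (indep C Y)"
proof (induction "card Y" arbitrary: Y rule: less_induct)
  case less
  have fY: "finite Y" using less.prems fin finite_subset by blast
  show ?case
  proof (cases "\<exists>e\<in>Y. \<exists>f\<in>Y. C e f")
    case False
    then have "indep C Y = Pow Y" unfolding indep_def by blast
    then show ?thesis using fY by (simp add: vertex_decomposable.simplex)
  next
    case True
    then obtain v w where vw: "v\<in>Y" "w\<in>Y" "C v w" and nb: "\<forall>x\<in>Y. C v x \<longrightarrow> x = w \<or> C w x"
      using simp_ex[OF less.prems True] by blast
    have del_eq: "del w (indep C Y) = indep C (Y - {w})" unfolding del_def indep_def by auto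
    have lk_eq: "lk w (indep C Y) = indep C (Y - {w} - {x. C w x})"
    proof (rule set_eqI)
      fix \<tau>
      show "\<tau> \<in> lk w (indep C Y) \<longleftrightarrow> \<tau> \<in> indep C (Y - {w} - {x. C w x})"
        unfolding lk_def indep_def using irr[of w] vw(2) sym by blast
    qed
    have c1: "card (Y - {w}) < card Y" using fY vw by (meson card_Diff1_less)
    have c2: "card (Y - {w} - {x. C w x}) < card Y"
      using c1 fY by (meson Diff_subset card_mono finite_Diff le_less_trans)
    have vd1: "vertex_decomposable (lk w (indep C Y))"
      unfolding lk_eq using less.hyps[OF c2] less.prems by auto
    have vd2: "vertex_decomposable (del w (indep C Y))"
      unfolding del_eq using less.hyps[OF c1] less.prems by auto
    have sing: "{w} \<in> indep C Y" using irr vw unfolding indep_def by auto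
    have facets: "\<forall>F. facet F (del w (indep C Y)) \<longrightarrow> facet F (indep C Y)"
    proof (intro allI impI)
      fix F assume "facet F (del w (indep C Y))"
      hence F: "F \<in> indep C (Y - {w})" and maxF: "\<forall>G\<in>indep C (Y-{w}). F \<subseteq> G \<longrightarrow> G = F"
        unfolding facet_def del_eq by auto
      show "facet F (indep C Y)"
        unfolding facet_def
      proof (intro conjI ballI impI)
        show "F \<in> indep C Y" using F unfolding indep_def by auto
        fix G assume G: "G \<in> indep C Y" "F \<subseteq> G"
        show "G = F"
        proof (rule ccontr)
          assume ne: "G \<noteq> F"
          have wG: "w \<in> G"
          proof (rule ccontr)
            assume "w \<notin> G"
            then have "G \<in> indep C (Y - {w})" using G unfolding indep_def by auto
            then show False using maxF G ne by auto
          qed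
          have "G - {w} \<in> indep C (Y - {w})" using G unfolding indep_def by auto
          moreover have "F \<subseteq> G - {w}" using G F unfolding indep_def by auto
          ultimately have GF: "G - {w} = F" using maxF by auto
          have Fw: "\<forall>x\<in>F. \<not> C w x" using G wG GF unfolding indep_def by auto
          have vF: "v \<notin> F" using Fw vw sym by blast
          have vnw: "v \<noteq> w" using vw irr by auto
          have "insert v F \<in> indep C (Y - {w})"
            unfolding indep_def
          proof (intro CollectI conjI ballI)
            show "insert v F \<subseteq> Y - {w}" using F vw vnw unfolding indep_def by auto
            fix e f assume e: "e \<in> insert v F" and f: "f \<in> insert v F"
            have FF: "\<forall>e\<in>F. \<forall>f\<in>F. \<not> C e f" "F \<subseteq> Y - {w}" using F unfolding indep_def by auto
            have vx: "\<And>x. x \<in> F \<Longrightarrow> \<not> C v x" using nb FF(2) Fw by blast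
            show "\<not> C e f" using e f FF(1) vx sym irr by blast
          qed
          then show False using maxF vF by auto
        qed
      qed
    qed
    have "{w} \<in> indep C Y" by (rule sing)
    then show ?thesis using vertex_decomposable.decomp[OF _ vd1 vd2 facets] by blast
  qed
qed



lemma adj_sym: "un_adj Y s t u v \<Longrightarrow> un_adj Y s t v u"
  unfolding un_adj_def by (metis insert_commute)

lemma adj_mono: "Y \<subseteq> E \<Longrightarrow> un_adj Y s t u v \<Longrightarrow> un_adj E s t u v"
  unfolding un_adj_def by blast

lemma adj_V: "multidigraph V E s t \<Longrightarrow> un_adj E s t u v \<Longrightarrow> u \<in> V \<and> v \<in> V"
  unfolding un_adj_def multidigraph_def by (metis doubleton_eq_iff)

lemma leaf:
  assumes F: "multidiforest V E s t" and Y: "Y \<subseteq> E" "Y \<noteq> {}"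
  shows "\<exists>x y. un_adj Y s t x y \<and> (\<forall>z. un_adj Y s t x z \<longrightarrow> z = y)"
proof -
  have MD: "multidigraph V E s t" and noloop: "\<And>v. \<not> un_adj E s t v v"
    and nocyc: "\<And>vs. \<not> un_cycle V E s t vs" and fV: "finite V"
    using F unfolding multidiforest_def underlying_forest_def multidigraph_def by auto
  define P where "P ps \<longleftrightarrow> length ps \<ge> 2 \<and> distinct ps \<and> set ps \<subseteq> V \<and>
     (\<forall>i. Suc i < length ps \<longrightarrow> un_adj Y s t (ps!i) (ps!Suc i))" for ps
  obtain e where e: "e \<in> Y" using Y by blast
  have ady: "un_adj Y s t (s e) (t e)" using e unfolding un_adj_def by blast
  have "s e \<noteq> t e" using noloop adj_mono[OF Y(1) ady] by metis
  moreover have "s e \<in> V" "t e \<in> V" using adj_V[OF MD adj_mono[OF Y(1) ady]] by auto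
  ultimately have P0: "P [s e, t e]" unfolding P_def using ady by (auto simp: less_Suc_eq)
  have bound: "\<forall>q. P q \<longrightarrow> length q < Suc (card V)"
  proof (intro allI impI)
    fix q assume "P q"
    then have "card (set q) = length q" "card (set q) \<le> card V"
      unfolding P_def using distinct_card card_mono fV by auto
    then show "length q < Suc (card V)" by simp
  qed
  obtain p where Pp: "P p" and maxp: "\<forall>q. P q \<longrightarrow> length q \<le> length p"
    using Lattices_Big.ex_has_greatest_nat[of P "[s e, t e]" length "Suc (card V)"] P0 bound by blast
  have lp: "length p \<ge> 2" using Pp unfolding P_def by simp
  have xy: "un_adj Y s t (p!0) (p!1)" using Pp lp unfolding P_def by auto
  show ?thesis
  proof (intro exI conjI allI impI)
    show "un_adj Y s t (p!0) (p!1)" by (rule xy)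
    fix z assume z: "un_adj Y s t (p!0) z"
    have zE: "un_adj E s t (p!0) z" by (rule adj_mono[OF Y(1) z])
    show "z = p!1"
    proof (cases "z \<in> set p")
      case False
      have "P (z # p)"
        unfolding P_def
      proof (intro conjI allI impI)
        show "2 \<le> length (z # p)" using lp by simp
        show "distinct (z # p)" using False Pp unfolding P_def by simp
        show "set (z # p) \<subseteq> V" using Pp adj_V[OF MD zE] unfolding P_def by simp
        fix i assume i: "Suc i < length (z # p)"
        show "un_adj Y s t ((z # p) ! i) ((z # p) ! Suc i)"
        proof (cases i)
          case 0 then show ?thesis using adj_sym[OF z] by simp
        next
          case (Suc j) then show ?thesis using Pp i unfolding P_def by simp
        qed
      qed
      then show ?thesis using maxp by (metis Suc_n_not_le_n length_Cons)
    next
      case True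
      then obtain k where k: "k < length p" "p!k = z" unfolding in_set_conv_nth by blast
      consider "k = 0" | "k = 1" | "k \<ge> 2" by linarith
      then show ?thesis
      proof cases
        case 1 then have "z = p!0" using k by simp
        then show ?thesis using zE noloop by metis
      next
        case 2 then show ?thesis using k by simp
      next
        case 3
        define c where "c = take (Suc k) p"
        have lc: "length c = Suc k" using k unfolding c_def by simp
        have "un_cycle V E s t c"
          unfolding un_cycle_def
        proof (intro conjI allI impI)
          show "3 \<le> length c" using lc 3 by simp
          show "distinct c" using Pp unfolding c_def P_def by simp
          have "set p \<subseteq> V" using Pp unfolding P_def by simp
          then show "set c \<subseteq> V" using set_take_subset[of "Suc k" p] unfolding c_def by (rule subset_trans[rotated])
          fix i assume i: "i < length c"
          show "un_adj E s t (c ! i) (c ! ((i + 1) mod length c))"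
          proof (cases "i = k")
            case True
            then have "(i + 1) mod length c = 0" using lc by simp
            then show ?thesis using True adj_sym[OF zE] k lc unfolding c_def by simp
          next
            case False
            then have i1: "(i + 1) mod length c = Suc i" "Suc i < length p" using lc i k by auto
            have "un_adj Y s t (p!i) (p!Suc i)" using Pp i1 unfolding P_def by blast
            then show ?thesis using adj_mono[OF Y(1)] i1 False lc i unfolding c_def by simp
          qed
        qed
        then show ?thesis using nocyc by blast
      qed
    qed
  qed
qed



lemma conf_sym: "conf s t e f \<Longrightarrow> conf s t f e"
  unfolding conf_def by auto

lemma simplicial:
  assumes F: "multidiforest V E s t" and Y: "Y \<subseteq> E" and ex: "\<exists>e\<in>Y. \<exists>f\<in>Y. conf s t e f"
  shows "\<exists>v\<in>Y. \<exists>w\<in>Y. conf s t v w \<and> (\<forall>x\<in>Y. conf s t v x \<longrightarrow> x = w \<or> conf s t w x)"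
proof -
  have noloop: "\<And>v. \<not> un_adj E s t v v"
    using F unfolding multidiforest_def underlying_forest_def by blast
  define Z where "Z = {e\<in>Y. \<exists>f\<in>Y. conf s t e f}"
  have ZY: "Z \<subseteq> Y" unfolding Z_def by auto
  have Z1: "Z \<subseteq> E" using ZY Y by blast
  have Z2: "Z \<noteq> {}" using ex unfolding Z_def by blast
  note Z = Z1 Z2
  obtain x y where xy: "un_adj Z s t x y" and leaf: "\<forall>z. un_adj Z s t x z \<longrightarrow> z = y"
    using leaf[OF F Z] by blast
  obtain a where a: "a \<in> Z" "{s a, t a} = {x, y}" using xy unfolding un_adj_def by blast
  have xney: "x \<noteq> y" using noloop adj_mono[OF Z(1) xy] by metis
  have inZ: "\<And>z b. z \<in> Y \<Longrightarrow> b \<in> Y \<Longrightarrow> conf s t b z \<Longrightarrow> z \<in> Z"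
    unfolding Z_def using conf_sym by (metis (mono_tags, lifting) mem_Collect_eq)
  have adjZ: "\<And>z. z \<in> Z \<Longrightarrow> un_adj Z s t (s z) (t z)" unfolding un_adj_def by blast
  show ?thesis
  proof (cases "\<exists>b\<in>Z. s b = y \<and> t b = x")
    case True
    then obtain b where b: "b \<in> Z" "s b = y" "t b = x" by blast
    then obtain w where w: "w \<in> Y" "conf s t b w" unfolding Z_def by blast
    define M where "M = {e\<in>Y. (s e = x \<and> t e = y) \<or> (s e = y \<and> t e = x)}"
    have inM: "z \<in> M" if z: "z \<in> Y" "conf s t b z" for z
    proof -
      have zZ: "z \<in> Z" using inZ[OF z(1) _ z(2)] b ZY by blast
      have "t z = x \<or> (s z = x \<and> t z = y)" using z(2) b unfolding conf_def by auto
      then show ?thesis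
      proof
        assume tz: "t z = x"
        have "un_adj Z s t x (s z)" using adj_sym[OF adjZ[OF zZ]] tz by simp
        then have "s z = y" using leaf by blast
        then show ?thesis using tz z unfolding M_def by blast
      next
        assume "s z = x \<and> t z = y" then show ?thesis using z unfolding M_def by blast
      qed
    qed
    have clique: "\<And>z z'. z\<in>M \<Longrightarrow> z'\<in>M \<Longrightarrow> z \<noteq> z' \<Longrightarrow> conf s t z z'"
      unfolding M_def conf_def using xney by auto
    have "\<forall>z\<in>Y. conf s t b z \<longrightarrow> z = w \<or> conf s t w z"
    proof (intro ballI impI)
      fix z assume "z \<in> Y" "conf s t b z"
      then have "z \<in> M" by (rule inM)
      moreover have "w \<in> M" using inM w by blast
      ultimately show "z = w \<or> conf s t w z" using clique by blast
    qed
    moreover have "b \<in> Y" using b ZY by blast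
    ultimately show ?thesis using w by blast
  next
    case False
    then have a': "s a = x" "t a = y" using a xney by (auto simp: doubleton_eq_iff)
    obtain w where w: "w \<in> Y" "conf s t a w" using a unfolding Z_def by blast
    have tgt: "t z = y" if z: "z \<in> Y" "conf s t a z" for z
    proof -
      have zZ: "z \<in> Z" using inZ[OF z(1) _ z(2)] a ZY by blast
      have "t z = t a \<or> (s a = t z \<and> t a = s z)" using z(2) unfolding conf_def by auto
      then show ?thesis using False zZ a' by auto
    qed
    have "\<forall>z\<in>Y. conf s t a z \<longrightarrow> z = w \<or> conf s t w z"
    proof (intro ballI impI)
      fix z assume z: "z \<in> Y" "conf s t a z"
      show "z = w \<or> conf s t w z" using tgt[OF z] tgt[OF w] unfolding conf_def by auto
    qed
    moreover have "a \<in> Y" using a ZY by blast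
    ultimately show ?thesis using w by blast
  qed
qed


lemma DT_char1:
  assumes F: "multidiforest V E s t" and \<sigma>: "\<sigma> \<subseteq> E" and df: "directed_forest V \<sigma> s t"
  shows "\<forall>e\<in>\<sigma>. \<forall>f\<in>\<sigma>. \<not> conf s t e f"
proof (intro ballI notI)
  fix e f assume e: "e \<in> \<sigma>" and f: "f \<in> \<sigma>" and c: "conf s t e f"
  have MD: "multidigraph V E s t" and noloop: "\<And>v. \<not> un_adj E s t v v"
    using F unfolding multidiforest_def underlying_forest_def by blast+
  have ne: "e \<noteq> f" using c unfolding conf_def by blast
  have tinj: "\<forall>e1\<in>\<sigma>. \<forall>e2\<in>\<sigma>. e1 \<noteq> e2 \<longrightarrow> t e1 \<noteq> t e2" and nocyc: "\<And>W D. \<not> directed_cycle V \<sigma> s t W D"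
    using df unfolding directed_forest_def by blast+
  have "t e \<noteq> t f" using tinj e f ne by blast
  then have op: "s e = t f" "t e = s f" using c unfolding conf_def by blast+
  define u where "u = s e"
  define w where "w = t e"
  have eE: "e \<in> E" using e \<sigma> by blast
  have "un_adj E s t (s e) (t e)" using eE unfolding un_adj_def by blast
  then have uw: "u \<noteq> w" using noloop unfolding u_def w_def by metis
  have uV: "u \<in> V" "w \<in> V" using MD eE unfolding multidigraph_def u_def w_def by blast+
  have sf: "s f = w" "t f = u" using op unfolding u_def w_def by simp_all
  have se: "s e = u" "t e = w" unfolding u_def w_def by simp_all
  have s1: "{x \<in> {e, f}. s x = u} = {e}" using se sf uw by auto
  have s2: "{x \<in> {e, f}. s x = w} = {f}" using se sf uw by auto
  have s3: "{x \<in> {e, f}. t x = u} = {f}" using se sf uw by auto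
  have s4: "{x \<in> {e, f}. t x = w} = {e}" using se sf uw by auto
  let ?R = "{(s x, t x) | x. x \<in> {e, f}} \<union> {(t x, s x) | x. x \<in> {e, f}}"
  have r1: "(u, w) \<in> ?R" using se by blast
  have r2: "(w, u) \<in> ?R" using se by blast
  have conn: "sub_connected {u, w} {e, f} s t"
    unfolding sub_connected_def
  proof (intro ballI)
    fix a b assume a: "a \<in> {u, w}" and b: "b \<in> {u, w}"
    show "(a, b) \<in> ?R\<^sup>*"
    proof (cases "a = b")
      case True then show ?thesis by simp
    next
      case False
      then have "(a, b) = (u, w) \<or> (a, b) = (w, u)" using a b by blast
      then show ?thesis using r1 r2 by blast
    qed
  qed
  have "directed_cycle V \<sigma> s t {u, w} {e, f}"
    unfolding directed_cycle_def
  proof (intro conjI ballI)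
    show "{u, w} \<noteq> {}" by simp
    show "{u, w} \<subseteq> V" using uV by simp
    show "{e, f} \<subseteq> \<sigma>" using e f by simp
    show "sub_connected {u, w} {e, f} s t" by (rule conn)
    fix x assume "x \<in> {e, f}"
    then show "s x \<in> {u, w}" "t x \<in> {u, w}" using se sf by auto
  next
    fix v assume "v \<in> {u, w}"
    then show "card {x \<in> {e, f}. s x = v} = 1" "card {x \<in> {e, f}. t x = v} = 1"
      using s1 s2 s3 s4 by auto
  qed
  then show False using nocyc by blast
qed

lemma DT_char2:
  assumes F: "multidiforest V E s t" and \<sigma>: "\<sigma> \<subseteq> E" and nc: "\<forall>e\<in>\<sigma>. \<forall>f\<in>\<sigma>. \<not> conf s t e f"
  shows "directed_forest V \<sigma> s t"
  unfolding directed_forest_def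
proof (intro conjI allI ballI impI notI)
  fix e1 e2 assume "e1 \<in> \<sigma>" "e2 \<in> \<sigma>" "e1 \<noteq> e2" "t e1 = t e2"
  then show False using nc unfolding conf_def by blast
next
  fix W D assume dc: "directed_cycle V \<sigma> s t W D"
  have noloop: "\<And>v. \<not> un_adj E s t v v" and nocyc: "\<And>vs. \<not> un_cycle V E s t vs"
    and fV: "finite V"
    using F unfolding multidiforest_def underlying_forest_def multidigraph_def by blast+
  have W: "W \<noteq> {}" "W \<subseteq> V" "D \<subseteq> \<sigma>" "\<forall>e\<in>D. s e \<in> W \<and> t e \<in> W"
    and cards: "\<forall>v\<in>W. card {e \<in> D. s e = v} = 1"
    using dc unfolding directed_cycle_def by blast+
  have fW: "finite W" using W(2) fV finite_subset by blast
  have out: "\<exists>e. e \<in> D \<and> s e = v" if v: "v \<in> W" for v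
  proof -
    have "card {e \<in> D. s e = v} = 1" using cards v by blast
    then have "{e \<in> D. s e = v} \<noteq> {}" by (metis card.empty zero_neq_one)
    then show ?thesis by blast
  qed
  define out where "out v = (SOME e. e \<in> D \<and> s e = v)" for v
  have outp: "out v \<in> D \<and> s (out v) = v" if "v \<in> W" for v
    unfolding out_def by (rule someI_ex[OF out[OF that]])
  obtain v0 where v0: "v0 \<in> W" using W(1) by blast
  define sq where "sq n = ((\<lambda>v. t (out v)) ^^ n) v0" for n
  have sqS: "sq (Suc n) = t (out (sq n))" for n unfolding sq_def by simp
  have sqW: "sq n \<in> W" for n
  proof (induction n)
    case 0 then show ?case using v0 unfolding sq_def by simp
  next
    case (Suc n) then show ?case using outp[OF Suc] W(4) sqS by metis
  qed
  have edge: "out (sq n) \<in> \<sigma> \<and> s (out (sq n)) = sq n \<and> t (out (sq n)) = sq (Suc n)" for n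
    using outp[OF sqW[of n]] W(3) sqS[of n] by auto
  have adj: "un_adj E s t (sq n) (sq (Suc n))" for n
  proof -
    have "out (sq n) \<in> E" using edge[of n] \<sigma> by blast
    moreover have "{s (out (sq n)), t (out (sq n))} = {sq n, sq (Suc n)}" using edge[of n] by simp
    ultimately show ?thesis unfolding un_adj_def by blast
  qed
  have "\<not> inj_on sq {..card W}"
  proof
    assume "inj_on sq {..card W}"
    then have "card (sq ` {..card W}) = Suc (card W)" by (simp add: card_image)
    moreover have "sq ` {..card W} \<subseteq> W" using sqW by blast
    then have "card (sq ` {..card W}) \<le> card W" by (rule card_mono[OF fW])
    ultimately show False by simp
  qed
  then obtain a b where ab: "a \<noteq> b" "sq a = sq b" unfolding inj_on_def by blast
  have exj: "\<exists>j. \<exists>i<j. sq i = sq j"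
  proof (cases "a < b")
    case True then show ?thesis using ab by blast
  next
    case False then have "b < a" using ab by simp
    then show ?thesis using ab(2)[symmetric] by blast
  qed
  define j where "j = (LEAST j. \<exists>i<j. sq i = sq j)"
  have jex: "\<exists>i<j. sq i = sq j" unfolding j_def by (rule LeastI_ex[OF exj])
  have norep: "sq a \<noteq> sq b" if "a < b" "b < j" for a b
  proof
    assume "sq a = sq b"
    then have "\<exists>i<b. sq i = sq b" using that by blast
    then have "j \<le> b" unfolding j_def by (rule Least_le)
    then show False using that by simp
  qed
  obtain i where i: "i < j" "sq i = sq j" using jex by blast
  consider "j = Suc i" | "j = Suc (Suc i)" | "j \<ge> i + 3" using i by linarith
  then show False
  proof cases
    case 1
    then show False using adj[of i] i noloop by metis
  next
    case 2
    define e1 where "e1 = out (sq i)"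
    define e2 where "e2 = out (sq (Suc i))"
    have d: "sq i \<noteq> sq (Suc i)" using norep 2 by simp
    have "e1 \<noteq> e2" using edge[of i] edge[of "Suc i"] d unfolding e1_def e2_def by metis
    moreover have "s e1 = t e2" "t e1 = s e2"
      using edge[of i] edge[of "Suc i"] i 2 unfolding e1_def e2_def by metis+
    moreover have "e1 \<in> \<sigma>" "e2 \<in> \<sigma>" using edge unfolding e1_def e2_def by blast+
    ultimately show False using nc unfolding conf_def by blast
  next
    case 3
    define c where "c = map sq [i..<j]"
    have lc: "length c = j - i" unfolding c_def by simp
    have cn: "c ! k = sq (i + k)" if "k < j - i" for k unfolding c_def using that by simp
    have "un_cycle V E s t c"
      unfolding un_cycle_def
    proof (intro conjI allI impI)
      show "3 \<le> length c" using lc 3 by simp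
      have "inj_on sq {i..<j}"
        unfolding inj_on_def
      proof (intro ballI impI)
        fix x y assume xy: "x \<in> {i..<j}" "y \<in> {i..<j}" "sq x = sq y"
        show "x = y"
        proof (rule ccontr)
          assume "x \<noteq> y"
          then consider "x < y" | "y < x" by linarith
          then show False
          proof cases
            case 1 then show False using norep[of x y] xy by auto
          next
            case 2 then show False using norep[of y x] xy by auto
          qed
        qed
      qed
      then show "distinct c" unfolding c_def by (simp add: distinct_map)
      show "set c \<subseteq> V" unfolding c_def using sqW W(2) by auto
      fix k assume k: "k < length c"
      have "c ! ((k + 1) mod length c) = sq (Suc (i + k))"
      proof (cases "k + 1 < length c")
        case True
        then show ?thesis using cn[of "k+1"] lc by simp
      next
        case False
        then have "k + 1 = length c" using k by simp
        then have "(k + 1) mod length c = 0" "Suc (i + k) = j" using lc 3 by simp_all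
        then show ?thesis using cn[of 0] lc 3 i by simp
      qed
      then show "un_adj E s t (c ! k) (c ! ((k + 1) mod length c))"
        using adj[of "i + k"] cn[of k] k lc by simp
    qed
    then show False using nocyc by blast
  qed
qed

theorem theorem5p2:
  fixes V :: "'v set" and E :: "'e set" and s t :: "'e \<Rightarrow> 'v"
  assumes "multidiforest V E s t"
  shows "vertex_decomposable (DT V E s t)"
proof -
  have fE: "finite E" using assms unfolding multidiforest_def multidigraph_def by blast
  have eq: "DT V E s t = indep (conf s t) E"
    unfolding DT_def indep_def using DT_char1[OF assms] DT_char2[OF assms] by blast
  have "vertex_decomposable (indep (conf s t) E)"
  proof (rule vd_indep[OF fE])
    show "\<And>e. \<not> conf s t e e" unfolding conf_def by simp
    show "\<And>e f. conf s t e f \<Longrightarrow> conf s t f e" by (rule conf_sym)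
    show "\<And>Y. Y \<subseteq> E \<Longrightarrow> \<exists>e\<in>Y. \<exists>f\<in>Y. conf s t e f \<Longrightarrow>
        \<exists>v\<in>Y. \<exists>w\<in>Y. conf s t v w \<and> (\<forall>x\<in>Y. conf s t v x \<longrightarrow> x = w \<or> conf s t w x)"
      by (rule simplicial[OF assms])
    show "E \<subseteq> E" by simp
  qed
  then show ?thesis using eq by simp
qed

end
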